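(* Assume $d>0$ (in addition to the standing assumptions, including condition (L)). For every $q>0$, the Riccati differential equation $$(\epsilon'_q)\qquad y'-y^2=-q\,r^2$$ on $(0,\xi)$ has a unique nonnegative solution $w_q$ defined on the whole interval $(0,\xi)$ and satisfying $\lim_{s\to\xi-}w_q(s)=0$. Moreover $w_q>0$ on $(0,\xi)$, and there exist $0<s_1<s_2<\xi$ such that $w_q(s)<\sqrt q\, r(s)$ for all $s\in(0,s_1)\cup(s_2,\xi)$. Consequently $\int_0^\xi w_q(s)\,ds<\infty$, and $w_q$ is decreasing on some neighborhood of $0+$ and on some neighborhood of $\xi-$.
   Context: Discrete setting. Fix real numbers $\rho>0$, $d\ge 0$, $c>0$ and nonnegative reals $(\pi_k)_{k\ge1}$ with $\sum_{k\ge1}\pi_k=\rho$. Write $\bar\pi_k=\sum_{i\ge k}\pi_i$. Condition (L): $\sum_{i\ge1}\pi_i\log i<\infty$ (equivalently $\sum_k\bar\pi_k/k<\infty$). Set $\psi(s)=d-(\rho+d)s+\sum_{i\ge1}\pi_i s^{i+1}$ for $s\in[0,1]$, and under (L) define for $s\in(0,1]$ $$m(s)=\int_s^1\frac{\psi(v)}{c\,v(1-v)}\,dv,$$ so that $e^{m(s)}=\beta s^{-d/c}\exp\big(\sum_{k\ge1}\bar\pi_k s^k/(ck)\big)$ with $\beta=\exp(-\sum_{k\ge1}\bar\pi_k/(ck))$. Define $\theta:(0,1]\to[0,\xi)$ by $\theta(s)=\int_s^1 e^{m(v)}dv$, where $\xi=\int_0^1e^{m(v)}dv\in(0,\infty]$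 (one has $\xi=\infty$ iff $d\ge c$); $\theta$ is a decreasing bijection, with inverse $\varphi:[0,\xi)\to(0,1]$, and $\varphi'(s)=-\exp(-m(\varphi(s)))$. Define $$r(s)=\frac{|\varphi'(s)|}{\sqrt{c\,\varphi(s)(1-\varphi(s))}},\qquad s\in(0,\xi).$$ *)

theory Defs
  imports "HOL-Analysis.Analysis"
begin

text \<open>Parameters: p = (pi_k) (only indices k >= 1 are used), rho, d, c.\<close>

definition psi :: "(nat \<Rightarrow> real) \<Rightarrow> real \<Rightarrow> real \<Rightarrow> real \<Rightarrow> real" where
  "psi p \<rho> d s = d - (\<rho> + d) * s + (\<Sum>i. p (Suc i) * s ^ (Suc i + 1))"

definition mfun :: "(nat \<Rightarrow> real) \<Rightarrow> real \<Rightarrow> real \<Rightarrow> real \<Rightarrow> real \<Rightarrow> real" where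
  "mfun p \<rho> d c s = integral {s..1} (\<lambda>v. psi p \<rho> d v / (c * v * (1 - v)))"

definition theta :: "(nat \<Rightarrow> real) \<Rightarrow> real \<Rightarrow> real \<Rightarrow> real \<Rightarrow> real \<Rightarrow> real" where
  "theta p \<rho> d c s = integral {s..1} (\<lambda>v. exp (mfun p \<rho> d c v))"

text \<open>xi = int_0^1 e^m, possibly infinite; as theta is decreasing, it is the supremum.\<close>
definition xi :: "(nat \<Rightarrow> real) \<Rightarrow> real \<Rightarrow> real \<Rightarrow> real \<Rightarrow> ereal" where
  "xi p \<rho> d c = (SUP s\<in>{0<..1}. ereal (theta p \<rho> d c s))"

definition Ixi :: "(nat \<Rightarrow> real) \<Rightarrow> real \<Rightarrow> real \<Rightarrow> real \<Rightarrow> real set" where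
  "Ixi p \<rho> d c = {s. 0 < s \<and> ereal s < xi p \<rho> d c}"

definition at_xi :: "(nat \<Rightarrow> real) \<Rightarrow> real \<Rightarrow> real \<Rightarrow> real \<Rightarrow> real filter" where
  "at_xi p \<rho> d c = (if xi p \<rho> d c = \<infinity> then at_top else at_left (real_of_ereal (xi p \<rho> d c)))"

definition phi :: "(nat \<Rightarrow> real) \<Rightarrow> real \<Rightarrow> real \<Rightarrow> real \<Rightarrow> real \<Rightarrow> real" where
  "phi p \<rho> d c t = (THE s. s \<in> {0<..1} \<and> theta p \<rho> d c s = t)"

definition rfun :: "(nat \<Rightarrow> real) \<Rightarrow> real \<Rightarrow> real \<Rightarrow> real \<Rightarrow> real \<Rightarrow> real" where
  "rfun p \<rho> d c s = \<bar>deriv (phi p \<rho> d c) s\<bar> /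
     sqrt (c * phi p \<rho> d c s * (1 - phi p \<rho> d c s))"

definition riccati_sol :: "(nat \<Rightarrow> real) \<Rightarrow> real \<Rightarrow> real \<Rightarrow> real \<Rightarrow> real \<Rightarrow> (real \<Rightarrow> real) \<Rightarrow> bool" where
  "riccati_sol p \<rho> d c q w \<longleftrightarrow>
     (\<forall>s\<in>Ixi p \<rho> d c.
        (w has_real_derivative (w s ^ 2 - q * rfun p \<rho> d c s ^ 2)) (at s))"

end

theory Submission
  imports Defs "HOL-Real_Asymp.Real_Asymp"
begin

lemma int_bound:
  fixes f g :: "real \<Rightarrow> real"
  assumes "continuous_on {a<..b} f" "\<And>x. x \<in> {a<..b} \<Longrightarrow> \<bar>f x\<bar> \<le> g x" "g integrable_on {a..b}"
  shows "f integrable_on {a..b}"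
proof -
  have neg: "negligible ({a..b} - {a<..b} \<union> ({a<..b} - {a..b}))"
    by (rule negligible_subset[of "{a}"]) auto
  have gi: "g integrable_on {a<..b}" using assms(3) integrable_spike_set_eq[OF neg] by blast
  have mf: "f \<in> borel_measurable (lebesgue_on {a<..b})"
    by (rule continuous_imp_measurable_on_sets_lebesgue[OF assms(1)]) auto
  have "f integrable_on {a<..b}"
    by (rule measurable_bounded_by_integrable_imp_integrable_real[OF mf gi]) (use assms(2) in auto)
  then show ?thesis using integrable_spike_set_eq[OF neg] by blast
qed

definition gt :: "nat \<Rightarrow> real \<Rightarrow> real" where "gt i t = (\<Sum>j\<le>i. t^j)"

lemma gt_eq: "t \<noteq> 1 \<Longrightarrow> gt i t = (1 - t^Suc i) / (1 - t)"
  unfolding gt_def by (simp add: sum_gp0)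

lemma gt_mul: "(1 - t) * gt i t = 1 - t^Suc i"
  unfolding gt_def by (metis lessThan_Suc_atMost one_diff_power_eq)

lemma gt_bounds: assumes "0 \<le> t" "t < 1" shows "0 \<le> gt i t" "gt i t \<le> 1 / (1 - t)"
proof -
  show "0 \<le> gt i t" unfolding gt_def using assms by (intro sum_nonneg) auto
  have "gt i t = (1 - t^Suc i) / (1 - t)" using assms gt_eq by auto
  also have "\<dots> \<le> 1 / (1 - t)" using assms by (intro divide_right_mono) auto
  finally show "gt i t \<le> 1 / (1 - t)" .
qed

lemma gt_integral: "(gt i has_integral harm (Suc i)) {0..1}"
proof -
  have "((\<lambda>t. t^j) has_integral (1 / real (Suc j))) {0..1}" for j
  proof -
    have "((\<lambda>t. t^j) has_integral ((1::real)^Suc j / Suc j - 0^Suc j / Suc j)) {0..1}"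
    proof (rule fundamental_theorem_of_calculus)
      fix x :: real
      have "((\<lambda>t. t^Suc j / real (Suc j)) has_real_derivative (real (Suc j) * x^j / real (Suc j))) (at x)"
        by (intro DERIV_cdivide) (use DERIV_pow[of "Suc j" x UNIV] in simp)
      then have "((\<lambda>t. t^Suc j / real (Suc j)) has_real_derivative x^j) (at x)" by simp
      then show "((\<lambda>t. t^Suc j / real (Suc j)) has_vector_derivative x^j) (at x within {0..1})"
        by (simp add: has_real_derivative_iff_has_vector_derivative[symmetric] has_field_derivative_at_within)
    qed simp
    then show ?thesis by simp
  qed
  then have "(gt i has_integral (\<Sum>j\<le>i. 1 / real (Suc j))) {0..1}"
    unfolding gt_def by (intro has_integral_sum) auto
  moreover have "(\<Sum>j\<le>i. 1 / real (Suc j)) = harm (Suc i)"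
    unfolding harm_altdef lessThan_Suc_atMost by (simp add: inverse_eq_divide)
  ultimately show ?thesis by simp
qed

lemma harm_le_ln: "n \<ge> 1 \<Longrightarrow> harm n \<le> 1 + ln (real n)"
  using euler_mascheroni_sequence_decreasing[of 1 n] by (simp add: harm_altdef)

locale bd =
  fixes p :: "nat \<Rightarrow> real" and \<rho> d c :: real
  assumes rho_pos: "\<rho> > 0" and d_pos: "d > 0" and c_pos: "c > 0"
    and p_nonneg: "\<And>k. k \<ge> 1 \<Longrightarrow> p k \<ge> 0"
    and p_sum: "(\<lambda>k. p (Suc k)) sums \<rho>"
    and condL: "summable (\<lambda>i. p (Suc i) * ln (real (Suc i)))"
begin

lemma pS: "p (Suc i) \<ge> 0" using p_nonneg by auto

definition gfun :: "real \<Rightarrow> real" where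
  "gfun t = (if t < 1 then (\<Sum>i. p (Suc i) * gt i t) else 0)"

lemma g_summable: assumes "0 \<le> t" "t < 1" shows "summable (\<lambda>i. p (Suc i) * gt i t)"
proof (rule summable_comparison_test)
  show "summable (\<lambda>i. p (Suc i) * (1 / (1 - t)))"
    using p_sum by (intro summable_mult2) (auto simp: sums_iff)
  have "\<forall>n\<ge>0. norm (p (Suc n) * gt n t) \<le> p (Suc n) * (1 / (1 - t))"
  proof (intro allI impI)
    fix n :: nat
    have "norm (p (Suc n) * gt n t) = p (Suc n) * gt n t" using gt_bounds(1)[OF assms] pS[of n] by simp
    also have "\<dots> \<le> p (Suc n) * (1 / (1 - t))" using gt_bounds(2)[OF assms] pS[of n] by (rule mult_left_mono)
    finally show "norm (p (Suc n) * gt n t) \<le> p (Suc n) * (1 / (1 - t))" .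
  qed
  then show "\<exists>N. \<forall>n\<ge>N. norm (p (Suc n) * gt n t) \<le> p (Suc n) * (1 / (1 - t))" by blast
qed

lemma g_nonneg: "0 \<le> t \<Longrightarrow> 0 \<le> gfun t"
  unfolding gfun_def using g_summable gt_bounds pS
  by (auto intro!: suminf_nonneg)

lemma psi_eq: assumes "0 \<le> t" "t < 1"
  shows "psi p \<rho> d t = d * (1 - t) - t * (1 - t) * gfun t"
proof -
  have s1: "summable (\<lambda>i. p (Suc i) * t^Suc i)"
  proof (rule summable_comparison_test)
    show "summable (\<lambda>i. p (Suc i))" using p_sum by (auto simp: sums_iff)
    have "\<forall>n\<ge>0. norm (p (Suc n) * t^Suc n) \<le> p (Suc n)"
    proof (intro allI impI)
      fix n :: nat
      have "t^Suc n \<le> 1" using assms by (intro power_le_one) auto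
      then show "norm (p (Suc n) * t^Suc n) \<le> p (Suc n)"
        using assms pS[of n] by (simp add: abs_mult mult_left_le del: power_Suc)
    qed
    then show "\<exists>N. \<forall>n\<ge>N. norm (p (Suc n) * t^Suc n) \<le> p (Suc n)" by blast
  qed
  define S1 where "S1 = (\<Sum>i. p (Suc i) * t^Suc i)"
  have a: "(\<Sum>i. p (Suc i) * t ^ (Suc i + 1)) = t * S1"
    unfolding S1_def using s1 by (subst suminf_mult[symmetric]) (auto simp: algebra_simps)
  have "(1 - t) * gfun t = (\<Sum>i. (1 - t) * (p (Suc i) * gt i t))"
    unfolding gfun_def using assms g_summable[OF assms] by (simp add: suminf_mult)
  also have "\<dots> = (\<Sum>i. p (Suc i) - p (Suc i) * t^Suc i)"
    by (rule suminf_cong) (metis gt_mul mult.left_commute right_diff_distrib' mult_1_right)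
  also have "\<dots> = \<rho> - S1" unfolding S1_def
    using p_sum s1 suminf_diff[of "\<lambda>k. p (Suc k)" "\<lambda>i. p (Suc i) * t ^ Suc i"] by (auto simp: sums_iff)
  finally have b: "(1 - t) * gfun t = \<rho> - S1" .
  have c: "t * (1 - t) * gfun t = t * (\<rho> - S1)" using b by (simp add: mult.assoc)
  show ?thesis unfolding psi_def a c by (simp add: algebra_simps)
qed

end

context bd begin

definition Lsum where "Lsum = (\<Sum>i. p (Suc i) * ln (real (Suc i)))"

lemma g_int_conv: "gfun integrable_on {0..1} \<and> integral {0..1} gfun \<le> \<rho> + Lsum"
proof -
  define f where "f k t = (\<Sum>i<k. p (Suc i) * gt i t)" for k t
  have fint: "(f k has_integral (\<Sum>i<k. p (Suc i) * harm (Suc i))) {0..1}" for k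
    unfolding f_def by (intro has_integral_sum has_integral_mult_right gt_integral) auto
  have fint': "(f k has_integral (\<Sum>i<k. p (Suc i) * harm (Suc i))) {0<..<1}" for k
    using fint has_integral_Icc_iff_Ioo by blast
  have bnd: "(\<Sum>i<k. p (Suc i) * harm (Suc i)) \<le> \<rho> + Lsum" for k
  proof -
    have "(\<Sum>i<k. p (Suc i) * harm (Suc i)) \<le> (\<Sum>i<k. p (Suc i) + p (Suc i) * ln (real (Suc i)))"
    proof (intro sum_mono)
      fix i
      have "harm (Suc i) \<le> 1 + ln (real (Suc i))" by (rule harm_le_ln) simp
      then have "p (Suc i) * harm (Suc i) \<le> p (Suc i) * (1 + ln (real (Suc i)))"
        using pS by (rule mult_left_mono)
      then show "p (Suc i) * harm (Suc i) \<le> p (Suc i) + p (Suc i) * ln (real (Suc i))"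
        by (simp add: algebra_simps)
    qed
    also have "\<dots> \<le> (\<Sum>i. p (Suc i) + p (Suc i) * ln (real (Suc i)))"
      using p_sum condL pS by (intro sum_le_suminf summable_add) (auto simp: sums_iff)
    also have "\<dots> = \<rho> + Lsum" unfolding Lsum_def
      using p_sum condL by (subst suminf_add[symmetric]) (auto simp: sums_iff)
    finally show ?thesis .
  qed
  have hnn: "0 \<le> (\<Sum>i<k. p (Suc i) * harm (Suc i))" for k
    using pS by (intro sum_nonneg mult_nonneg_nonneg) (auto simp: harm_nonneg)
  have mc: "gfun integrable_on {0<..<1} \<and> ((\<lambda>k. integral {0<..<1} (f k)) \<longlonglongrightarrow> integral {0<..<1} gfun)"
  proof (rule monotone_convergence_increasing)
    show "f k integrable_on {0<..<1}" for k using fint' by blast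
    show "f k x \<le> f (Suc k) x" if "x \<in> {0<..<1}" for k x
      unfolding f_def using that gt_bounds[of x k] pS[of k] by simp
    show "(\<lambda>k. f k x) \<longlonglongrightarrow> gfun x" if "x \<in> {0<..<1}" for x
      unfolding f_def gfun_def using that g_summable[of x] by (auto intro!: summable_LIMSEQ)
    show "bounded (range (\<lambda>k. integral {0<..<1} (f k)))"
    proof -
      have "\<bar>integral {0<..<1} (f k)\<bar> \<le> \<rho> + Lsum" for k
        using integral_unique[OF fint'[of k]] bnd[of k] hnn[of k] by simp
      then show ?thesis unfolding bounded_iff by auto
    qed
  qed
  have gi: "gfun integrable_on {0..1}" using mc integrable_on_Icc_iff_Ioo by blast
  have "integral {0<..<1} gfun \<le> \<rho> + Lsum"
    using mc by (intro LIMSEQ_le_const2[of _ _]) (auto simp: integral_unique[OF fint'] bnd)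
  then show ?thesis using gi integral_open_interval_real by metis
qed

lemma g_int: "gfun integrable_on {0..1}" using g_int_conv by blast

definition al where "al = d / c"
definition Ig where "Ig v = integral {v..1} gfun"
definition Gg where "Gg = integral {0..1} gfun"
definition kf where "kf v = exp (- mfun p \<rho> d c v)"
definition Bk where "Bk = exp (Gg / c)"

lemma al_pos: "al > 0" unfolding al_def using d_pos c_pos by simp

lemma g_int_sub: "0 \<le> u \<Longrightarrow> u \<le> v \<Longrightarrow> v \<le> 1 \<Longrightarrow> gfun integrable_on {u..v}"
  by (rule integrable_subinterval_real[OF g_int]) auto

lemma Ig_bounds: assumes "0 \<le> v" "v \<le> 1" shows "0 \<le> Ig v" "Ig v \<le> Gg"
proof -
  show "0 \<le> Ig v" unfolding Ig_def using assms g_nonneg g_int_sub[of v 1]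
    by (intro integral_nonneg) auto
  show "Ig v \<le> Gg" unfolding Ig_def Gg_def using assms g_nonneg g_int_sub[of v 1] g_int
    by (intro integral_subset_le) auto
qed

lemma mfun_eq: assumes "0 < v" "v \<le> 1"
  shows "mfun p \<rho> d c v = - al * ln v - Ig v / c"
proof -
  have h1: "((\<lambda>t. al / t) has_integral (al * ln 1 - al * ln v)) {v..1}"
  proof (rule fundamental_theorem_of_calculus)
    show "v \<le> 1" by fact
    fix x assume "x \<in> {v..1}"
    then have "x > 0" using assms by auto
    then have "((\<lambda>t. al * ln t) has_real_derivative (al * (1 / x))) (at x)"
      by (auto intro!: derivative_eq_intros)
    then show "((\<lambda>t. al * ln t) has_vector_derivative al / x) (at x within {v..1})"
      by (simp add: has_real_derivative_iff_has_vector_derivative[symmetric] has_field_derivative_at_within)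
  qed
  have h2: "((\<lambda>t. gfun t / c) has_integral (Ig v / c)) {v..1}"
    unfolding Ig_def using g_int_sub[of v 1] assms
    by (intro has_integral_divide integrable_integral) auto
  have h3: "((\<lambda>t. al / t - gfun t / c) has_integral (- al * ln v - Ig v / c)) {v..1}"
    using has_integral_diff[OF h1 h2] by simp
  have h4: "((\<lambda>t. psi p \<rho> d t / (c * t * (1 - t))) has_integral (- al * ln v - Ig v / c)) {v..1}"
  proof (rule has_integral_spike[OF _ _ h3])
    show "negligible {1::real}" by simp
    fix t assume t: "t \<in> {v..1} - {1}"
    then have t0: "0 < t" "t < 1" using assms by auto
    have "psi p \<rho> d t / (c * t * (1 - t)) = (d * (1 - t) - t * (1 - t) * gfun t) / (c * t * (1 - t))"
      using psi_eq[of t] t0 by simp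
    also have "\<dots> = al / t - gfun t / c"
      unfolding al_def using t0 c_pos by (simp add: field_simps)
    finally show "psi p \<rho> d t / (c * t * (1 - t)) = al / t - gfun t / c" .
  qed
  then show ?thesis unfolding mfun_def by (rule integral_unique)
qed

lemma kf_eq: assumes "0 < v" "v \<le> 1" shows "kf v = v powr al * exp (Ig v / c)"
  unfolding kf_def mfun_eq[OF assms] using assms by (simp add: powr_def exp_add)

lemma kf_pos: "kf v > 0" unfolding kf_def by simp

lemma kf_bounds: assumes "0 < v" "v \<le> 1" shows "v powr al \<le> kf v" "kf v \<le> Bk * v powr al"
proof -
  have "0 \<le> Ig v / c" "Ig v / c \<le> Gg / c" using Ig_bounds[of v] assms c_pos by (auto simp: divide_right_mono)
  then have "1 \<le> exp (Ig v / c)" "exp (Ig v / c) \<le> Bk" unfolding Bk_def by auto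
  moreover have "0 \<le> v powr al" by simp
  ultimately show "v powr al \<le> kf v" "kf v \<le> Bk * v powr al" unfolding kf_eq[OF assms]
    by (metis mult.commute mult_left_mono mult_1_right)+
qed

lemma Ig_cont: "0 \<le> u \<Longrightarrow> u \<le> 1 \<Longrightarrow> continuous_on {u..1} Ig"
  unfolding Ig_def by (rule indefinite_integral_continuous_1'[OF g_int_sub]) auto

lemma mfun_cont: assumes "0 < u" "u \<le> 1" shows "continuous_on {u..1} (mfun p \<rho> d c)"
proof -
  have "continuous_on {u..1} (\<lambda>v. - al * ln v - Ig v / c)"
    using assms Ig_cont[of u] c_pos by (intro continuous_intros) auto
  then show ?thesis by (rule continuous_on_eq) (use mfun_eq assms in auto)
qed

lemma kf_cont: "0 < u \<Longrightarrow> u \<le> 1 \<Longrightarrow> continuous_on {u..1} kf"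
  unfolding kf_def by (intro continuous_intros mfun_cont)

lemma mfun_1: "mfun p \<rho> d c 1 = 0" unfolding mfun_def by simp
lemma kf_1: "kf 1 = 1" unfolding kf_def mfun_1 by simp

abbreviation "th \<equiv> theta p \<rho> d c"
abbreviation "ph \<equiv> phi p \<rho> d c"
abbreviation "XI \<equiv> xi p \<rho> d c"
abbreviation "IX \<equiv> Ixi p \<rho> d c"

lemma em_cont: "0 < u \<Longrightarrow> u \<le> 1 \<Longrightarrow> continuous_on {u..1} (\<lambda>t. exp (mfun p \<rho> d c t))"
  by (intro continuous_intros mfun_cont)

lemma th_cont: "0 < u \<Longrightarrow> u \<le> 1 \<Longrightarrow> continuous_on {u..1} th"
  unfolding theta_def by (rule indefinite_integral_continuous_1'[OF integrable_continuous_real[OF em_cont]])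

lemma th_deriv: assumes "0 < v" "v < 1"
  shows "(th has_real_derivative - exp (mfun p \<rho> d c v)) (at v)"
proof -
  have "(th has_real_derivative - exp (mfun p \<rho> d c v)) (at v within {v/2..1})"
    unfolding theta_def using assms by (intro integral_has_real_derivative' em_cont) auto
  moreover have "at v within {v/2..1} = at v"
    using assms by (intro at_within_interior) auto
  ultimately show ?thesis by simp
qed

lemma th_1: "th 1 = 0" unfolding theta_def by simp

lemma th_strict: assumes "0 < x" "x < y" "y \<le> 1" shows "th y < th x"
proof (rule DERIV_neg_imp_decreasing_open[OF assms(2)])
  show "\<exists>D. (th has_real_derivative D) (at z) \<and> D < 0" if "x < z" "z < y" for z
    using th_deriv[of z] that assms by (intro exI[of _ "- exp (mfun p \<rho> d c z)"]) auto
  show "continuous_on {x..y} th"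
    by (rule continuous_on_subset[OF th_cont[of x]]) (use assms in auto)
qed

lemma th_pos: "0 < v \<Longrightarrow> v < 1 \<Longrightarrow> th v > 0"
  using th_strict[of v 1] th_1 by simp

lemma th_le_xi: "0 < v \<Longrightarrow> v \<le> 1 \<Longrightarrow> ereal (th v) \<le> XI"
  unfolding xi_def by (rule SUP_upper) auto

lemma th_less_xi: assumes "0 < v" "v < 1" shows "ereal (th v) < XI"
proof -
  have "th v < th (v/2)" using assms by (intro th_strict) auto
  then have "ereal (th v) < ereal (th (v/2))" by simp
  also have "\<dots> \<le> XI" using th_le_xi[of "v/2"] assms by simp
  finally show ?thesis .
qed

lemma th_in_IX: "0 < v \<Longrightarrow> v < 1 \<Longrightarrow> th v \<in> IX"
  unfolding Ixi_def using th_pos th_less_xi by auto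

lemma th_inj: "0 < x \<Longrightarrow> x \<le> 1 \<Longrightarrow> 0 < y \<Longrightarrow> y \<le> 1 \<Longrightarrow> th x = th y \<Longrightarrow> x = y"
  using th_strict by (metis linorder_neq_iff order_less_imp_le)

lemma IX_ex: assumes "s \<in> IX" shows "\<exists>v. 0 < v \<and> v < 1 \<and> th v = s"
proof -
  have s: "0 < s" "ereal s < XI" using assms unfolding Ixi_def by auto
  then obtain v where v: "v \<in> {0<..1}" "ereal s < ereal (th v)" unfolding xi_def less_SUP_iff by auto
  have "\<exists>z. v \<le> z \<and> z \<le> 1 \<and> th z = s"
    using v th_1 s by (intro IVT2' th_cont) auto
  then obtain z where z: "v \<le> z" "z \<le> 1" "th z = s" by auto
  have "z \<noteq> 1" using z th_1 s by auto
  then show ?thesis using z v by (intro exI[of _ z]) auto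
qed

lemma ph_prop: assumes "s \<in> IX" shows "0 < ph s" "ph s < 1" "th (ph s) = s"
proof -
  obtain v where v: "0 < v" "v < 1" "th v = s" using IX_ex[OF assms] by auto
  have "ph s = v" unfolding phi_def
    by (rule the1_equality) (use v th_inj in auto)
  then show "0 < ph s" "ph s < 1" "th (ph s) = s" using v by auto
qed

lemma ph_th: assumes "0 < v" "v \<le> 1" shows "ph (th v) = v"
  unfolding phi_def by (rule the1_equality) (use assms th_inj in auto)

lemma ph_deriv: assumes "s \<in> IX" shows "(ph has_real_derivative - kf (ph s)) (at s)"
proof -
  define v where "v = ph s"
  have v: "0 < v" "v < 1" "th v = s" using ph_prop[OF assms] unfolding v_def by auto
  have cont: "isCont ph s"
  proof -
    have "isCont ph (th v)"
    proof (rule isCont_inverse_function2[of "v/2" v "(1+v)/2"])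
      show "v / 2 < v" "v < (1 + v) / 2" using v by auto
      show "ph (th z) = z" if "v / 2 \<le> z" "z \<le> (1 + v) / 2" for z
        using that v by (intro ph_th) auto
      show "isCont th z" if "v / 2 \<le> z" "z \<le> (1 + v) / 2" for z
        using that v th_deriv[of z] by (intro DERIV_isCont) auto
    qed
    then show ?thesis using v by simp
  qed
  define b where "b = th (v/2)"
  have sb: "s < b" unfolding b_def using v th_strict[of "v/2" v] by auto
  have bX: "ereal b < XI" unfolding b_def using v th_less_xi[of "v/2"] by auto
  have "(ph has_real_derivative inverse (- exp (mfun p \<rho> d c (ph s)))) (at s)"
  proof (rule DERIV_inverse_function[where a=0 and b=b])
    show "(th has_real_derivative - exp (mfun p \<rho> d c (ph s))) (at (ph s))"
      using th_deriv v unfolding v_def by auto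
    show "- exp (mfun p \<rho> d c (ph s)) \<noteq> 0" by simp
    show "0 < s" using v th_pos by auto
    show "s < b" by fact
    show "th (ph y) = y" if "0 < y" "y < b" for y
    proof -
      have "ereal y < ereal b" using that by simp
      then have "ereal y < XI" using bX by (rule less_trans)
      then show ?thesis using ph_prop(3)[of y] that unfolding Ixi_def by auto
    qed
    show "isCont ph s" by fact
  qed
  then show ?thesis unfolding kf_def by (simp add: exp_minus)
qed

lemma rfun_eq: assumes "s \<in> IX"
  shows "rfun p \<rho> d c s = kf (ph s) / sqrt (c * ph s * (1 - ph s))"
  unfolding rfun_def using DERIV_imp_deriv[OF ph_deriv[OF assms]] kf_pos[of "ph s"] by simp

lemma xi_pos: "XI > 0"
proof -
  have "0 < ereal (th (1/2))" using th_pos[of "1/2"] by simp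
  also have "\<dots> < XI" using th_less_xi[of "1/2"] by simp
  finally show ?thesis .
qed

lemma ev_xi: assumes "0 < v" "v < 1"
  shows "eventually (\<lambda>s. s \<in> IX \<and> th v < s) (at_xi p \<rho> d c)"
proof (cases "XI = \<infinity>")
  case True
  have "eventually (\<lambda>s. th v < s) at_top" by (rule eventually_gt_at_top)
  then have "eventually (\<lambda>s. 0 < s \<and> th v < s) at_top"
    by (rule eventually_mono) (use th_pos[OF assms] in auto)
  then show ?thesis unfolding at_xi_def using True th_pos[OF assms]
    by (auto simp: Ixi_def elim!: eventually_mono)
next
  case False
  have "XI \<noteq> - \<infinity>" using xi_pos by auto
  then obtain R where R: "XI = ereal R" using False by (cases XI) auto
  have "th v < R" using th_less_xi[OF assms] R by simp
  then have "eventually (\<lambda>s. s \<in> {th v<..<R}) (at_left R)" by (rule eventually_at_left_real)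
  then show ?thesis unfolding at_xi_def using R False th_pos[OF assms]
    by (auto simp: Ixi_def elim!: eventually_mono)
qed

lemma at_xi_nontriv: "at_xi p \<rho> d c \<noteq> bot"
  unfolding at_xi_def by auto

end

lemma neg_ln_le: assumes "0 < x" "x \<le> 1" shows "- ln x \<le> 2 / sqrt x"
proof -
  have "ln (1 / sqrt x) < 1 / sqrt x" using assms by (intro ln_less_self) auto
  moreover have "ln (1 / sqrt x) = - ln x / 2" using assms by (simp add: ln_div ln_sqrt)
  ultimately show ?thesis by simp
qed

context bd begin

lemma kf_cont': "continuous_on {0<..1} kf"
proof -
  have ig: "continuous_on {0<..1} Ig" by (rule continuous_on_subset[OF Ig_cont[of 0]]) auto
  have pw: "continuous_on {0<..1} (\<lambda>v::real. v powr al)"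
    by (rule continuous_on_powr') (auto intro: continuous_on_id continuous_on_const)
  have "continuous_on {0<..1} (\<lambda>v. v powr al * exp (Ig v / c))"
    by (rule continuous_on_mult[OF pw continuous_on_exp[OF continuous_on_divide[OF ig continuous_on_const]]]) (use c_pos in auto)
  then show ?thesis by (rule continuous_on_eq) (use kf_eq in auto)
qed

end

locale bdq = bd +
  fixes q :: real
  assumes q_pos: "q > 0"
begin

definition h where "h t = q * kf t / (c * t * (1 - t))"
definition Lm where "Lm v = integral {0..v} h"
definition CA where "CA = q * Bk / c"

lemma Bk_pos: "Bk > 0" unfolding Bk_def by simp
lemma CA_pos: "CA > 0" unfolding CA_def using q_pos Bk_pos c_pos by simp

lemma h_cont: "continuous_on {0<..<1} h"
proof -
  have k: "continuous_on {0<..<1} kf" by (rule continuous_on_subset[OF kf_cont']) auto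
  have "continuous_on {0<..<1} (\<lambda>t. q * kf t / (c * t * (1 - t)))"
    by (rule continuous_on_divide[OF continuous_on_mult[OF continuous_on_const k]])
       (use c_pos in \<open>auto intro!: continuous_on_mult continuous_on_const continuous_on_id continuous_on_diff\<close>)
  then show ?thesis unfolding h_def[abs_def] .
qed

lemma h_nonneg: "0 \<le> t \<Longrightarrow> t \<le> 1 \<Longrightarrow> 0 \<le> h t"
  unfolding h_def using q_pos c_pos kf_pos[of t] by (auto intro!: divide_nonneg_pos mult_nonneg_nonneg)

lemma h_pos: "0 < t \<Longrightarrow> t < 1 \<Longrightarrow> 0 < h t"
  unfolding h_def using q_pos c_pos kf_pos[of t] by (auto intro!: divide_pos_pos)

lemma h_bound: assumes "0 < t" "t \<le> v" "v < 1"
  shows "h t \<le> CA * (t powr (al - 1) + v powr al / (1 - t))"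
proof -
  have t1: "t < 1" using assms by auto
  have den: "0 < c * t * (1 - t)" using c_pos assms t1 by simp
  have "q * kf t \<le> q * (Bk * t powr al)"
    using kf_bounds(2)[of t] assms t1 q_pos by (intro mult_left_mono) auto
  then have "h t \<le> q * (Bk * t powr al) / (c * t * (1 - t))"
    unfolding h_def using den by (intro divide_right_mono) auto
  also have "\<dots> = CA * (t powr al / (t * (1 - t)))" unfolding CA_def using c_pos by (simp add: field_simps)
  also have "t powr al / (t * (1 - t)) = t powr (al - 1) + t powr al / (1 - t)"
    using assms t1 by (simp add: field_simps powr_diff)
  finally have a: "h t \<le> CA * (t powr (al - 1) + t powr al / (1 - t))" .
  have "t powr al \<le> v powr al" using assms al_pos by (intro powr_mono2) auto
  then have "t powr al / (1 - t) \<le> v powr al / (1 - t)" using t1 by (intro divide_right_mono) auto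
  then have "CA * (t powr (al - 1) + t powr al / (1 - t)) \<le> CA * (t powr (al - 1) + v powr al / (1 - t))"
    using CA_pos by (intro mult_left_mono add_left_mono) auto
  with a show ?thesis by linarith
qed

lemma int_inv1m: fixes v :: real assumes "0 \<le> v" "v < 1" shows "((\<lambda>t. 1 / (1 - t)) has_integral (- ln (1 - v))) {0..v}"
proof -
  have der: "((\<lambda>t::real. - ln (1 - t)) has_vector_derivative (\<lambda>t::real. 1 / (1 - t)) x) (at x within {0..v})"
    if "x \<in> {0..v}" for x :: real
  proof -
    have x: "x < 1" using that assms by auto
    have "((\<lambda>t. - ln (1 - t)) has_real_derivative (- (1 / (1 - x) * (0 - 1)))) (at x)"
      using x by (intro derivative_eq_intros DERIV_ln_divide) auto
    then show ?thesis
      by (simp add: has_real_derivative_iff_has_vector_derivative[symmetric] has_field_derivative_at_within)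
  qed
  from fundamental_theorem_of_calculus[OF assms(1) der] show ?thesis by simp
qed

lemma bound_int: assumes "0 \<le> v" "v < 1"
  shows "((\<lambda>t. CA * (t powr (al - 1) + v powr al / (1 - t))) has_integral
          CA * (v powr al / al + v powr al * (- ln (1 - v)))) {0..v}"
proof -
  have "((\<lambda>t. t powr (al - 1)) has_integral (v powr (al - 1 + 1) / (al - 1 + 1))) {0..v}"
    using al_pos assms by (intro has_integral_powr_from_0) auto
  then have i1: "((\<lambda>t. t powr (al - 1)) has_integral (v powr al / al)) {0..v}" by simp
  have i2: "((\<lambda>t. v powr al * (1 / (1 - t))) has_integral (v powr al * (- ln (1 - v)))) {0..v}"
    by (intro has_integral_mult_right int_inv1m assms)
  show ?thesis using has_integral_mult_right[OF has_integral_add[OF i1 i2], of CA] by simp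
qed

lemma h_int: assumes "0 \<le> v" "v < 1" shows "h integrable_on {0..v}"
proof (rule int_bound)
  show "continuous_on {0<..v} h" by (rule continuous_on_subset[OF h_cont]) (use assms in auto)
  show "\<bar>h x\<bar> \<le> CA * (x powr (al - 1) + v powr al / (1 - x))" if "x \<in> {0<..v}" for x
    using h_bound[of x v] h_nonneg[of x] that assms by auto
  show "(\<lambda>t. CA * (t powr (al - 1) + v powr al / (1 - t))) integrable_on {0..v}"
    using bound_int[OF assms] by blast
qed

lemma Lm_nonneg: "0 \<le> v \<Longrightarrow> v < 1 \<Longrightarrow> 0 \<le> Lm v"
  unfolding Lm_def using h_nonneg by (intro integral_nonneg h_int) auto

lemma Lm_bound: assumes "0 \<le> v" "v < 1"
  shows "Lm v \<le> CA * v powr al * (1 / al - ln (1 - v))"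
proof -
  have "Lm v \<le> CA * (v powr al / al + v powr al * (- ln (1 - v)))"
    unfolding Lm_def
  proof (rule has_integral_le[OF integrable_integral[OF h_int[OF assms]] bound_int[OF assms]])
    fix x assume x: "x \<in> {0..v}"
    show "h x \<le> CA * (x powr (al - 1) + v powr al / (1 - x))"
    proof (cases "x = 0")
      case True
      have "0 \<le> CA * (x powr (al - 1) + v powr al / (1 - x))"
        using True CA_pos assms by simp
      then show ?thesis using True h_def by simp
    next
      case False
      then show ?thesis using h_bound[of x v] x assms by auto
    qed
  qed
  then show ?thesis by (simp add: field_simps)
qed


definition gb where "gb v = CA / al + 2 * CA / sqrt (1 - v)"
definition Gf where "Gf v = CA / al * v + 4 * CA * (1 - sqrt (1 - v))"
definition Phi where "Phi v = exp (Gf v)"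

lemma gb_nonneg: "v < 1 \<Longrightarrow> 0 \<le> gb v"
  unfolding gb_def using CA_pos al_pos by (auto intro!: add_nonneg_nonneg divide_nonneg_nonneg)

lemma Phi_0: "Phi 0 = 1" unfolding Phi_def Gf_def by simp

lemma Phi_ge1: assumes "0 \<le> v" "v \<le> 1" shows "1 \<le> Phi v"
proof -
  have "0 \<le> Gf v" unfolding Gf_def using assms CA_pos al_pos
    by (intro add_nonneg_nonneg mult_nonneg_nonneg) (auto simp: real_sqrt_le_1_iff)
  then show ?thesis unfolding Phi_def by simp
qed

lemma Phi_bound: assumes "0 \<le> v" "v \<le> 1" shows "Phi v \<le> exp (CA / al + 4 * CA)"
proof -
  have "CA / al * v \<le> CA / al" using assms CA_pos al_pos by (intro mult_left_le) auto
  moreover have "4 * CA * (1 - sqrt (1 - v)) \<le> 4 * CA" using assms CA_pos by simp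
  ultimately show ?thesis unfolding Phi_def Gf_def by simp
qed

lemma gb_cont: "0 \<le> v \<Longrightarrow> v < 1 \<Longrightarrow> continuous_on {0..v} gb"
  unfolding gb_def[abs_def] by (intro continuous_intros) auto

lemma Phi_deriv: assumes "x < 1" shows "(Phi has_real_derivative gb x * Phi x) (at x)"
proof -
  have s: "sqrt (1 - x) > 0" using assms by simp
  have sq: "((\<lambda>t. sqrt (1 - t)) has_real_derivative (inverse (sqrt (1 - x)) / 2 * (0 - 1))) (at x)"
    by (rule DERIV_chain2[OF DERIV_real_sqrt]) (use assms in \<open>auto intro!: derivative_eq_intros\<close>)
  have "(Gf has_real_derivative (CA / al * 1 + 4 * CA * (0 - (inverse (sqrt (1 - x)) / 2 * (0 - 1))))) (at x)"
    unfolding Gf_def[abs_def]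
    by (intro DERIV_add DERIV_cmult DERIV_diff DERIV_const DERIV_ident sq)
  then have "(Gf has_real_derivative gb x) (at x)"
    unfolding gb_def using s by (simp add: field_simps)
  then show ?thesis unfolding Phi_def[abs_def] by (auto intro!: derivative_eq_intros simp: mult.commute)
qed

lemma Phi_cont: "0 \<le> v \<Longrightarrow> v < 1 \<Longrightarrow> continuous_on {0..v} Phi"
proof (intro continuous_at_imp_continuous_on ballI)
  fix x assume "0 \<le> v" "v < 1" "x \<in> {0..v}"
  then show "isCont Phi x" using Phi_deriv[of x] by (intro DERIV_isCont) auto
qed

lemma Phi_int: fixes v :: real assumes "0 \<le> v" "v < 1"
  shows "((\<lambda>t. gb t * Phi t) has_integral (Phi v - 1)) {0..v}"
proof -
  have der: "(Phi has_vector_derivative (\<lambda>t. gb t * Phi t) x) (at x within {0..v})" if "x \<in> {0..v}" for x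
    using Phi_deriv[of x] that assms
    by (simp add: has_real_derivative_iff_has_vector_derivative[symmetric] has_field_derivative_at_within)
  from fundamental_theorem_of_calculus[OF assms(1) der] show ?thesis by (simp add: Phi_0)
qed

lemma Lm_0: "Lm 0 = 0" unfolding Lm_def by simp

lemma Lm_kf: assumes "0 \<le> v" "v < 1" shows "Lm v / kf v \<le> gb v"
proof (cases "v = 0")
  case True then show ?thesis using Lm_0 gb_nonneg by simp
next
  case False
  then have v: "0 < v" using assms by simp
  have "Lm v / kf v \<le> CA * v powr al * (1 / al - ln (1 - v)) / (v powr al)"
  proof (rule frac_le)
    show "0 \<le> CA * v powr al * (1 / al - ln (1 - v))"
      using Lm_bound[OF assms] Lm_nonneg[OF assms] by linarith
    show "Lm v \<le> CA * v powr al * (1 / al - ln (1 - v))" by (rule Lm_bound[OF assms])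
    show "0 < v powr al" using v by simp
    show "v powr al \<le> kf v" using kf_bounds(1)[of v] v assms by simp
  qed
  also have "\<dots> = CA * (1 / al - ln (1 - v))" using v by simp
  also have "\<dots> \<le> CA * (1 / al + 2 / sqrt (1 - v))"
    using neg_ln_le[of "1 - v"] assms v CA_pos by (intro mult_left_mono) auto
  also have "\<dots> = gb v" unfolding gb_def by (simp add: field_simps)
  finally show ?thesis .
qed
end

context bdq begin

definition Good :: "(real \<Rightarrow> real) \<Rightarrow> bool" where
  "Good u \<longleftrightarrow> (\<forall>b. 0 \<le> b \<and> b < 1 \<longrightarrow> continuous_on {0..b} u) \<and>
     (\<forall>x. 0 \<le> x \<and> x < 1 \<longrightarrow> 1 \<le> u x \<and> u x \<le> Phi x) \<and>
     (\<forall>x y. 0 \<le> x \<and> x \<le> y \<and> y < 1 \<longrightarrow> u x \<le> u y)"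

definition Fop where "Fop u t = integral {0..t} (\<lambda>x. h x * u x)"
definition Top where "Top u v = 1 + integral {0..v} (\<lambda>t. Fop u t / kf t)"

lemma GoodD:
  assumes "Good u"
  shows "\<And>b. 0 \<le> b \<Longrightarrow> b < 1 \<Longrightarrow> continuous_on {0..b} u"
    "\<And>x. 0 \<le> x \<Longrightarrow> x < 1 \<Longrightarrow> 1 \<le> u x"
    "\<And>x. 0 \<le> x \<Longrightarrow> x < 1 \<Longrightarrow> u x \<le> Phi x"
    "\<And>x y. 0 \<le> x \<Longrightarrow> x \<le> y \<Longrightarrow> y < 1 \<Longrightarrow> u x \<le> u y"
  using assms unfolding Good_def by blast+

lemma hu_int: assumes "Good u" "0 \<le> t" "t < 1" shows "(\<lambda>x. h x * u x) integrable_on {0..t}"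
proof (rule int_bound)
  show "continuous_on {0<..t} (\<lambda>x. h x * u x)"
    by (intro continuous_on_mult continuous_on_subset[OF h_cont] continuous_on_subset[OF GoodD(1)[OF assms]]) (use assms in auto)
  show "\<bar>h x * u x\<bar> \<le> h x * u t" if "x \<in> {0<..t}" for x
  proof -
    have "0 \<le> h x" "1 \<le> u x" "u x \<le> u t" using that assms h_nonneg[of x] GoodD[OF assms(1)] by auto
    then show ?thesis by (simp add: abs_mult mult_left_mono)
  qed
  show "(\<lambda>x. h x * u t) integrable_on {0..t}" by (intro integrable_on_mult_left h_int) (use assms in auto)
qed

lemma Fop_nonneg: assumes "Good u" "0 \<le> t" "t < 1" shows "0 \<le> Fop u t"
  unfolding Fop_def
proof (rule integral_nonneg[OF hu_int[OF assms]])
  fix x assume "x \<in> {0..t}"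
  then show "0 \<le> h x * u x" using assms h_nonneg[of x] GoodD(2)[OF assms(1), of x] by auto
qed

lemma Fop_le: assumes "Good u" "0 \<le> t" "t < 1" shows "Fop u t \<le> Lm t * u t"
proof -
  have "Fop u t \<le> integral {0..t} (\<lambda>x. h x * u t)"
    unfolding Fop_def
  proof (rule integral_le)
    show "(\<lambda>x. h x * u x) integrable_on {0..t}" by (rule hu_int[OF assms])
    show "(\<lambda>x. h x * u t) integrable_on {0..t}" by (intro integrable_on_mult_left h_int) (use assms in auto)
    show "h x * u x \<le> h x * u t" if "x \<in> {0..t}" for x
      using that assms h_nonneg[of x] GoodD(4)[OF assms(1), of x t] by (auto intro: mult_left_mono)
  qed
  then show ?thesis unfolding Lm_def by simp
qed

lemma Fop_cont: assumes "Good u" "0 \<le> b" "b < 1" shows "continuous_on {0..b} (Fop u)"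
  unfolding Fop_def[abs_def] by (rule indefinite_integral_continuous_1[OF hu_int[OF assms]])

lemma Fk_bound: assumes "Good u" "0 \<le> t" "t < 1"
  shows "0 \<le> Fop u t / kf t" "Fop u t / kf t \<le> gb t * Phi t"
proof -
  show "0 \<le> Fop u t / kf t" using Fop_nonneg[OF assms] kf_pos[of t] by simp
  have "Fop u t / kf t \<le> Lm t * u t / kf t"
    using Fop_le[OF assms] kf_pos[of t] by (simp add: divide_right_mono)
  also have "\<dots> = (Lm t / kf t) * u t" by simp
  also have "\<dots> \<le> gb t * u t"
    using Lm_kf[of t] assms GoodD(2)[OF assms(1), of t] by (intro mult_right_mono) auto
  also have "\<dots> \<le> gb t * Phi t"
    using gb_nonneg[of t] assms GoodD(3)[OF assms(1), of t] by (intro mult_left_mono) auto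
  finally show "Fop u t / kf t \<le> gb t * Phi t" .
qed

lemma Fk_int: assumes "Good u" "0 \<le> v" "v < 1" shows "(\<lambda>t. Fop u t / kf t) integrable_on {0..v}"
proof (rule int_bound)
  show "continuous_on {0<..v} (\<lambda>t. Fop u t / kf t)"
  proof (rule continuous_on_divide)
    show "continuous_on {0<..v} (Fop u)" by (rule continuous_on_subset[OF Fop_cont[OF assms]]) auto
    show "continuous_on {0<..v} kf" by (rule continuous_on_subset[OF kf_cont']) (use assms in auto)
    show "\<forall>x\<in>{0<..v}. kf x \<noteq> 0" using kf_pos by (metis less_irrefl)
  qed
  show "\<bar>Fop u x / kf x\<bar> \<le> gb x * Phi x" if "x \<in> {0<..v}" for x
    using Fk_bound[OF assms(1), of x] that assms by auto
  show "(\<lambda>x. gb x * Phi x) integrable_on {0..v}"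
    using Phi_int[OF assms(2,3)] by blast
qed

lemma Top_good: assumes "Good u" shows "Good (Top u)"
  unfolding Good_def
proof (intro conjI allI impI)
  fix b :: real assume b: "0 \<le> b \<and> b < 1"
  show "continuous_on {0..b} (Top u)" unfolding Top_def[abs_def]
    by (intro continuous_on_add continuous_on_const indefinite_integral_continuous_1 Fk_int assms) (use b in auto)
next
  fix x :: real assume x: "0 \<le> x \<and> x < 1"
  have "0 \<le> integral {0..x} (\<lambda>t. Fop u t / kf t)"
    by (rule integral_nonneg[OF Fk_int[OF assms]]) (use x Fk_bound[OF assms] in auto)
  then show "1 \<le> Top u x" unfolding Top_def by simp
  have "integral {0..x} (\<lambda>t. Fop u t / kf t) \<le> integral {0..x} (\<lambda>t. gb t * Phi t)"
    using x Fk_bound[OF assms] by (intro integral_le Fk_int assms) (auto intro: has_integral_integrable[OF Phi_int])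
  also have "\<dots> = Phi x - 1" using Phi_int x by (simp add: integral_unique)
  finally show "Top u x \<le> Phi x" unfolding Top_def by simp
next
  fix x y :: real assume xy: "0 \<le> x \<and> x \<le> y \<and> y < 1"
  have "integral {0..x} (\<lambda>t. Fop u t / kf t) \<le> integral {0..y} (\<lambda>t. Fop u t / kf t)"
    using xy Fk_bound[OF assms] by (intro integral_subset_le Fk_int assms) auto
  then show "Top u x \<le> Top u y" unfolding Top_def by simp
qed

lemma Top_mono: assumes "Good u" "Good u'" "\<And>x. 0 \<le> x \<Longrightarrow> x < 1 \<Longrightarrow> u x \<le> u' x"
  shows "\<And>t. 0 \<le> t \<Longrightarrow> t < 1 \<Longrightarrow> Fop u t \<le> Fop u' t"
    "\<And>v. 0 \<le> v \<Longrightarrow> v < 1 \<Longrightarrow> Top u v \<le> Top u' v"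
proof -
  fix t :: real assume t: "0 \<le> t" "t < 1"
  show "Fop u t \<le> Fop u' t" unfolding Fop_def
    using t assms h_nonneg by (intro integral_le hu_int) (auto intro: mult_left_mono)
next
  fix v :: real assume v: "0 \<le> v" "v < 1"
  have F: "Fop u t \<le> Fop u' t" if "0 \<le> t" "t < 1" for t
    unfolding Fop_def using that assms h_nonneg by (intro integral_le hu_int) (auto intro: mult_left_mono)
  have "integral {0..v} (\<lambda>t. Fop u t / kf t) \<le> integral {0..v} (\<lambda>t. Fop u' t / kf t)"
  proof (rule integral_le)
    show "(\<lambda>t. Fop u t / kf t) integrable_on {0..v}" by (rule Fk_int[OF assms(1) v])
    show "(\<lambda>t. Fop u' t / kf t) integrable_on {0..v}" by (rule Fk_int[OF assms(2) v])
    show "Fop u x / kf x \<le> Fop u' x / kf x" if "x \<in> {0..v}" for x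
      using F[of x] that v kf_pos[of x] by (auto intro: divide_right_mono)
  qed
  then show "Top u v \<le> Top u' v" unfolding Top_def by simp
qed


primrec Uit :: "nat \<Rightarrow> real \<Rightarrow> real" where
  "Uit 0 = (\<lambda>v. 1)"
| "Uit (Suc n) = Top (Uit n)"

lemma Good_1: "Good (\<lambda>v. 1)"
  unfolding Good_def using Phi_ge1 by auto

lemma Uit_good: "Good (Uit n)"
  by (induction n) (auto intro: Good_1 Top_good)

lemma Uit_mono: "0 \<le> x \<Longrightarrow> x < 1 \<Longrightarrow> Uit n x \<le> Uit (Suc n) x"
proof (induction n arbitrary: x)
  case 0
  then show ?case using GoodD(2)[OF Uit_good[of 1]] by simp
next
  case (Suc n)
  show ?case using Top_mono(2)[OF Uit_good Uit_good, of n "Suc n"] Suc by simp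
qed

definition U where "U v = (SUP n. Uit n v)"

lemma U_lim: assumes "0 \<le> v" "v < 1" shows "(\<lambda>n. Uit n v) \<longlonglongrightarrow> U v"
  unfolding U_def
proof (rule LIMSEQ_incseq_SUP)
  show "bdd_above (range (\<lambda>n. Uit n v))"
    using GoodD(3)[OF Uit_good] assms by (intro bdd_aboveI[of _ "Phi v"]) auto
  show "incseq (\<lambda>n. Uit n v)" using Uit_mono assms by (intro incseq_SucI) auto
qed

lemma stepA: assumes "0 \<le> t" "t < 1"
  shows "(\<lambda>x. h x * U x) integrable_on {0..t} \<and> (\<lambda>k. Fop (Uit k) t) \<longlonglongrightarrow> Fop U t"
proof -
  have "(\<lambda>x. h x * U x) integrable_on {0..t} \<and>
        (\<lambda>k. integral {0..t} (\<lambda>x. h x * Uit k x)) \<longlonglongrightarrow> integral {0..t} (\<lambda>x. h x * U x)"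
  proof (rule monotone_convergence_increasing)
    show "(\<lambda>x. h x * Uit k x) integrable_on {0..t}" for k by (rule hu_int[OF Uit_good assms])
    show "h x * Uit k x \<le> h x * Uit (Suc k) x" if "x \<in> {0..t}" for k x
      using that assms h_nonneg[of x] Uit_mono[of x k] by (auto intro: mult_left_mono)
    show "(\<lambda>k. h x * Uit k x) \<longlonglongrightarrow> h x * U x" if "x \<in> {0..t}" for x
      using that assms by (intro tendsto_mult_left U_lim) auto
    have "\<bar>integral {0..t} (\<lambda>x. h x * Uit k x)\<bar> \<le> Lm t * Phi t" for k
    proof -
      have "0 \<le> Fop (Uit k) t" "Fop (Uit k) t \<le> Lm t * Uit k t"
        using Fop_nonneg[OF Uit_good assms] Fop_le[OF Uit_good assms] by auto
      moreover have "Lm t * Uit k t \<le> Lm t * Phi t"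
        using Lm_nonneg[OF assms] GoodD(3)[OF Uit_good assms] by (intro mult_left_mono)
      ultimately show ?thesis unfolding Fop_def by simp
    qed
    then show "bounded (range (\<lambda>k. integral {0..t} (\<lambda>x. h x * Uit k x)))"
      unfolding bounded_iff by auto
  qed
  then show ?thesis unfolding Fop_def by simp
qed

lemma stepB: assumes "0 \<le> v" "v < 1"
  shows "(\<lambda>t. Fop U t / kf t) integrable_on {0..v} \<and> (\<lambda>k. Top (Uit k) v) \<longlonglongrightarrow> Top U v"
proof -
  have "(\<lambda>t. Fop U t / kf t) integrable_on {0..v} \<and>
        (\<lambda>k. integral {0..v} (\<lambda>t. Fop (Uit k) t / kf t)) \<longlonglongrightarrow> integral {0..v} (\<lambda>t. Fop U t / kf t)"
  proof (rule monotone_convergence_increasing)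
    show "(\<lambda>t. Fop (Uit k) t / kf t) integrable_on {0..v}" for k by (rule Fk_int[OF Uit_good assms])
    show "Fop (Uit k) x / kf x \<le> Fop (Uit (Suc k)) x / kf x" if "x \<in> {0..v}" for k x
    proof -
      have "Fop (Uit k) x \<le> Fop (Uit (Suc k)) x"
        using that assms by (intro Top_mono(1)[OF Uit_good Uit_good] Uit_mono) auto
      then show ?thesis using kf_pos[of x] by (intro divide_right_mono) auto
    qed
    show "(\<lambda>k. Fop (Uit k) x / kf x) \<longlonglongrightarrow> Fop U x / kf x" if "x \<in> {0..v}" for x
      using that assms stepA[of x] by (intro tendsto_divide tendsto_const) (auto simp: kf_pos less_imp_neq[OF kf_pos, symmetric])
    have "\<bar>integral {0..v} (\<lambda>t. Fop (Uit k) t / kf t)\<bar> \<le> Phi v - 1" for k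
    proof -
      have "0 \<le> integral {0..v} (\<lambda>t. Fop (Uit k) t / kf t)"
        by (rule integral_nonneg[OF Fk_int[OF Uit_good assms]]) (use assms Fk_bound[OF Uit_good] in auto)
      moreover have "Top (Uit k) v \<le> Phi v"
        using GoodD(3)[OF Top_good[OF Uit_good] assms] by simp
      ultimately show ?thesis unfolding Top_def by simp
    qed
    then show "bounded (range (\<lambda>k. integral {0..v} (\<lambda>t. Fop (Uit k) t / kf t)))"
      unfolding bounded_iff by auto
  qed
  then show ?thesis unfolding Top_def by (auto intro: tendsto_add)
qed

lemma U_fix: assumes "0 \<le> v" "v < 1" shows "U v = Top U v"
proof -
  have "(\<lambda>k. Uit (Suc k) v) \<longlonglongrightarrow> U v" using U_lim[OF assms] by (rule LIMSEQ_Suc)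
  moreover have "(\<lambda>k. Uit (Suc k) v) \<longlonglongrightarrow> Top U v" using stepB[OF assms] by simp
  ultimately show ?thesis by (rule LIMSEQ_unique)
qed

lemma U_good: "Good U"
  unfolding Good_def
proof (intro conjI allI impI)
  fix b :: real assume b: "0 \<le> b \<and> b < 1"
  have "continuous_on {0..b} (Top U)" unfolding Top_def[abs_def]
    by (intro continuous_on_add continuous_on_const indefinite_integral_continuous_1) (use stepB b in auto)
  then show "continuous_on {0..b} U" by (rule continuous_on_eq) (use U_fix b in auto)
next
  fix x :: real assume x: "0 \<le> x \<and> x < 1"
  show "1 \<le> U x" using LIMSEQ_le_const[OF U_lim, of x 1] x GoodD(2)[OF Uit_good] by auto
  show "U x \<le> Phi x" using LIMSEQ_le_const2[OF U_lim, of x "Phi x"] x GoodD(3)[OF Uit_good] by auto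
next
  fix x y :: real assume xy: "0 \<le> x \<and> x \<le> y \<and> y < 1"
  show "U x \<le> U y" using LIMSEQ_le[OF U_lim U_lim, of x y] xy GoodD(4)[OF Uit_good] by auto
qed

lemma ftc_at: assumes "f integrable_on {0..b}" "continuous_on {0<..<b} f" "0 < v" "v < b"
  shows "((\<lambda>u. integral {0..u} f) has_real_derivative f v) (at v)"
proof -
  have "isCont f v" using assms(2,3,4) continuous_on_eq_continuous_at[of "{0<..<b}" f] by auto
  then have "continuous (at v within {0..b} - {}) f" by (simp add: continuous_at_imp_continuous_at_within)
  from integral_has_vector_derivative_continuous_at[OF assms(1) _ finite.emptyI this]
  have "((\<lambda>u. integral {0..u} f) has_vector_derivative f v) (at v within {0..b})" using assms by auto
  moreover have "at v within {0..b} = at v" using assms by (intro at_within_interior) auto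
  ultimately show ?thesis by (simp add: has_real_derivative_iff_has_vector_derivative)
qed

definition F where "F = Fop U"

lemma F_deriv: assumes "0 < v" "v < 1" shows "(F has_real_derivative h v * U v) (at v)"
  unfolding F_def Fop_def[abs_def]
proof (rule ftc_at[where b="(1 + v) / 2"])
  show "(\<lambda>x. h x * U x) integrable_on {0..(1 + v) / 2}" using assms stepA by auto
  show "continuous_on {0<..<(1 + v) / 2} (\<lambda>x. h x * U x)"
    by (intro continuous_on_mult continuous_on_subset[OF h_cont] continuous_on_subset[OF GoodD(1)[OF U_good, of "(1+v)/2"]]) (use assms in auto)
qed (use assms in auto)

lemma U_deriv: assumes "0 < v" "v < 1" shows "(U has_real_derivative F v / kf v) (at v)"
proof -
  have "((\<lambda>u. integral {0..u} (\<lambda>t. Fop U t / kf t)) has_real_derivative Fop U v / kf v) (at v)"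
  proof (rule ftc_at[where b="(1 + v) / 2"])
    show "(\<lambda>t. Fop U t / kf t) integrable_on {0..(1 + v) / 2}" using assms stepB by auto
    show "continuous_on {0<..<(1 + v) / 2} (\<lambda>t. Fop U t / kf t)"
    proof (rule continuous_on_divide)
      show "continuous_on {0<..<(1 + v) / 2} (Fop U)"
        by (rule continuous_on_subset[OF Fop_cont[OF U_good, of "(1+v)/2"]]) (use assms in auto)
      show "continuous_on {0<..<(1 + v) / 2} kf" by (rule continuous_on_subset[OF kf_cont']) (use assms in auto)
      show "\<forall>x\<in>{0<..<(1 + v) / 2}. kf x \<noteq> 0" using kf_pos by (metis less_irrefl)
    qed
  qed (use assms in auto)
  then have "(Top U has_real_derivative Fop U v / kf v) (at v)"
    unfolding Top_def[abs_def] by (auto intro!: derivative_eq_intros)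
  then show ?thesis unfolding F_def
    by (rule has_field_derivative_transform_within_open[where S="{0<..<1}"]) (use assms U_fix in auto)
qed

lemma F_nonneg: "0 \<le> t \<Longrightarrow> t < 1 \<Longrightarrow> 0 \<le> F t"
  unfolding F_def by (rule Fop_nonneg[OF U_good])

lemma F_le: "0 \<le> t \<Longrightarrow> t < 1 \<Longrightarrow> F t \<le> Lm t * U t"
  unfolding F_def by (rule Fop_le[OF U_good])

lemma F_0: "F 0 = 0" unfolding F_def Fop_def by simp

lemma F_pos: assumes "0 < t" "t < 1" shows "0 < F t"
proof -
  have "F 0 < F t"
  proof (rule DERIV_pos_imp_increasing_open[OF assms(1)])
    show "\<exists>y. (F has_real_derivative y) (at x) \<and> 0 < y" if "0 < x" "x < t" for x
      using F_deriv[of x] h_pos[of x] GoodD(2)[OF U_good, of x] that assms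
      by (intro exI[of _ "h x * U x"]) auto
    show "continuous_on {0..t} F" unfolding F_def by (rule Fop_cont[OF U_good]) (use assms in auto)
  qed
  then show ?thesis using F_0 by simp
qed
end

lemma l0: "((\<lambda>v::real. ln (1 - v) * sqrt (1 - v)) \<longlongrightarrow> 0) (at_left 1)"
  by real_asymp
lemma l1: fixes K C :: real shows "((\<lambda>v. (K - ln (1 - v)) * sqrt (C * (1 - v))) \<longlongrightarrow> 0) (at_left 1)"
proof -
  have "((\<lambda>v. sqrt C * (K * sqrt (1 - v) - ln (1 - v) * sqrt (1 - v))) \<longlongrightarrow> sqrt C * (K * sqrt (1 - 1) - 0)) (at_left 1)"
    by (intro tendsto_intros l0)
  moreover have "(K - ln (1 - v)) * sqrt (C * (1 - v)) = sqrt C * (K * sqrt (1 - v) - ln (1 - v) * sqrt (1 - v))" for v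
    by (simp only: real_sqrt_mult) (simp add: algebra_simps)
  ultimately show ?thesis by simp
qed
lemma l2: fixes K C :: real shows "((\<lambda>v. (K - ln (1 - v)) * sqrt (C * v)) \<longlongrightarrow> 0) (at_right 0)"
proof -
  have "((\<lambda>v. (K - ln (1 - v)) * sqrt (C * v)) \<longlongrightarrow> (K - ln (1 - 0)) * sqrt (C * 0)) (at_right 0)"
    by (intro tendsto_intros) auto
  then show ?thesis by simp
qed

context bdq begin

definition W where "W s = F (ph s) / U (ph s)"

lemma U_ge1: "0 \<le> v \<Longrightarrow> v < 1 \<Longrightarrow> 1 \<le> U v" by (rule GoodD(2)[OF U_good])

lemma W_deriv: assumes s: "s \<in> IX"
  shows "(W has_real_derivative (W s ^ 2 - q * rfun p \<rho> d c s ^ 2)) (at s)"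
proof -
  define v where "v = ph s"
  have v: "0 < v" "v < 1" using ph_prop[OF s] unfolding v_def by auto
  have U1: "1 \<le> U v" using U_ge1 v by auto
  have kp: "kf v > 0" by (rule kf_pos)
  have dF: "((\<lambda>x. F (ph x)) has_real_derivative (h v * U v) * (- kf v)) (at s)"
    using DERIV_chain2[OF F_deriv[OF v, unfolded v_def] ph_deriv[OF s]] unfolding v_def .
  have dU: "((\<lambda>x. U (ph x)) has_real_derivative (F v / kf v) * (- kf v)) (at s)"
    using DERIV_chain2[OF U_deriv[OF v, unfolded v_def] ph_deriv[OF s]] unfolding v_def .
  have "(W has_real_derivative ((h v * U v) * (- kf v) * U v - F v * ((F v / kf v) * (- kf v))) / (U v * U v)) (at s)"
    unfolding W_def[abs_def] using DERIV_divide[OF dF dU] U1 unfolding v_def by simp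
  moreover have "((h v * U v) * (- kf v) * U v - F v * ((F v / kf v) * (- kf v))) / (U v * U v)
      = W s ^ 2 - q * rfun p \<rho> d c s ^ 2"
  proof -
    have r: "rfun p \<rho> d c s ^ 2 = kf v ^ 2 / (c * v * (1 - v))"
      unfolding rfun_eq[OF s] v_def[symmetric] using v c_pos by (simp add: power_divide)
    show ?thesis unfolding r W_def v_def[symmetric] h_def using v c_pos kp U1
      by (simp add: field_simps power2_eq_square)
  qed
  ultimately show ?thesis by simp
qed

lemma W_riccati: "riccati_sol p \<rho> d c q W"
  unfolding riccati_sol_def using W_deriv by blast

lemma W_pos: assumes "s \<in> IX" shows "0 < W s"
  unfolding W_def using ph_prop[OF assms] F_pos[of "ph s"] U_ge1[of "ph s"] by (auto intro!: divide_pos_pos)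

lemma W_le: assumes "s \<in> IX" shows "W s \<le> Lm (ph s)"
proof -
  define v where "v = ph s"
  have v: "0 < v" "v < 1" using ph_prop[OF assms] unfolding v_def by auto
  have "F v \<le> Lm v * U v" using F_le v by auto
  then show ?thesis unfolding W_def v_def[symmetric] using U_ge1[of v] v by (simp add: divide_le_eq)
qed

lemma ph_less: assumes "s \<in> IX" "0 < v" "v < 1" "th v < s" shows "ph s < v"
proof (rule ccontr)
  assume "\<not> ph s < v"
  then have "th (ph s) \<le> th v"
    using ph_prop[OF assms(1)] assms th_strict[of v "ph s"] by (cases "ph s = v") auto
  then show False using ph_prop(3)[OF assms(1)] assms by simp
qed

lemma ph_greater: assumes "s \<in> IX" "0 < v" "v < 1" "s < th v" shows "v < ph s"
proof (rule ccontr)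
  assume "\<not> v < ph s"
  then have "th v \<le> th (ph s)"
    using ph_prop[OF assms(1)] assms th_strict[of "ph s" v] by (cases "ph s = v") auto
  then show False using ph_prop(3)[OF assms(1)] assms by simp
qed

definition LB where "LB v = CA * (1 / al - ln (1 - v))"

lemma Lm_LB: "0 \<le> v \<Longrightarrow> v < 1 \<Longrightarrow> Lm v \<le> v powr al * LB v"
  using Lm_bound unfolding LB_def by (simp add: mult.assoc mult.left_commute)

lemma W_lim: "(W \<longlongrightarrow> 0) (at_xi p \<rho> d c)"
proof (rule tendstoI)
  fix e :: real assume e: "e > 0"
  have ev0: "eventually (\<lambda>x. 0 \<le> x) (at_right (0::real))"
    by (rule eventually_mono[OF eventually_at_right_less]) auto
  have "((\<lambda>v. v powr al * LB v) \<longlongrightarrow> 0 * LB 0) (at_right 0)"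
    unfolding LB_def using al_pos ev0
    by (intro tendsto_mult tendsto_zero_powrI tendsto_intros) auto
  then have "eventually (\<lambda>v. v powr al * LB v < e) (at_right 0)"
    using e by (auto dest: order_tendstoD(2))
  then obtain b where b: "b > 0" "\<And>y. 0 < y \<Longrightarrow> y < b \<Longrightarrow> y powr al * LB y < e"
    unfolding eventually_at_right_field by auto
  define v where "v = min (b/2) (1/2)"
  have v: "0 < v" "v < 1" "v < b" using b unfolding v_def by auto
  show "eventually (\<lambda>s. dist (W s) 0 < e) (at_xi p \<rho> d c)"
    using ev_xi[OF v(1,2)]
  proof (rule eventually_mono)
    fix s assume s: "s \<in> IX \<and> th v < s"
    then have ps: "ph s < v" using ph_less v by auto
    have p0: "0 < ph s" "ph s < 1" using ph_prop s by auto
    have "W s \<le> Lm (ph s)" using W_le s by auto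
    also have "\<dots> \<le> ph s powr al * LB (ph s)" using Lm_LB p0 by auto
    also have "\<dots> < e" using b(2)[of "ph s"] p0 ps v by auto
    finally show "dist (W s) 0 < e" using W_pos[of s] s by simp
  qed
qed

lemma LB_nonneg: "0 \<le> v \<Longrightarrow> v < 1 \<Longrightarrow> 0 \<le> LB v"
proof -
  assume a: "0 \<le> v" "v < 1"
  then have "ln (1 - v) \<le> 0" by (subst ln_le_zero_iff) auto
  moreover have "0 < 1 / al" using al_pos by simp
  ultimately have "0 \<le> 1 / al - ln (1 - v)" by linarith
  then show ?thesis unfolding LB_def using CA_pos by simp
qed

lemma rhs_ge: assumes "0 < v" "v < 1"
  shows "sqrt q * v powr al / sqrt (c * v) \<le> sqrt q * kf v / sqrt (c * v * (1 - v))"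
    "sqrt q * v powr al / sqrt (c * (1 - v)) \<le> sqrt q * kf v / sqrt (c * v * (1 - v))"
proof -
  have k: "v powr al \<le> kf v" using kf_bounds(1)[of v] assms by simp
  have s1: "sqrt (c * v * (1 - v)) \<le> sqrt (c * v)" using assms c_pos by (simp add: mult_left_le)
  have s2: "sqrt (c * v * (1 - v)) \<le> sqrt (c * (1 - v))" using assms c_pos
    by (simp add: mult_left_le mult.commute mult.left_commute)
  have p: "0 < sqrt (c * v * (1 - v))" using assms c_pos by simp
  have nq: "0 \<le> sqrt q * v powr al" using q_pos by simp
  have "sqrt q * v powr al / sqrt (c * v) \<le> sqrt q * v powr al / sqrt (c * v * (1 - v))"
    using s1 p nq by (intro divide_left_mono) auto
  also have "\<dots> \<le> sqrt q * kf v / sqrt (c * v * (1 - v))"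
    using k p q_pos by (intro divide_right_mono mult_left_mono) auto
  finally show "sqrt q * v powr al / sqrt (c * v) \<le> sqrt q * kf v / sqrt (c * v * (1 - v))" .
  have "sqrt q * v powr al / sqrt (c * (1 - v)) \<le> sqrt q * v powr al / sqrt (c * v * (1 - v))"
    using s2 p nq by (intro divide_left_mono) auto
  also have "\<dots> \<le> sqrt q * kf v / sqrt (c * v * (1 - v))"
    using k p q_pos by (intro divide_right_mono mult_left_mono) auto
  finally show "sqrt q * v powr al / sqrt (c * (1 - v)) \<le> sqrt q * kf v / sqrt (c * v * (1 - v))" .
qed

lemma E0: obtains b where "0 < b" "b < 1"
  "\<And>v. 0 < v \<Longrightarrow> v < b \<Longrightarrow> Lm v < sqrt q * kf v / sqrt (c * v * (1 - v))"
proof -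
  have "((\<lambda>v. CA * ((1 / al - ln (1 - v)) * sqrt (c * v))) \<longlongrightarrow> CA * 0) (at_right 0)"
    by (intro tendsto_mult tendsto_const l2)
  then have "eventually (\<lambda>v. CA * ((1 / al - ln (1 - v)) * sqrt (c * v)) < sqrt q) (at_right 0)"
    by (rule order_tendstoD(2)) (use q_pos in simp)
  then obtain b where b: "b > 0" "\<And>y. 0 < y \<Longrightarrow> y < b \<Longrightarrow> CA * ((1 / al - ln (1 - y)) * sqrt (c * y)) < sqrt q"
    unfolding eventually_at_right_field by auto
  define b' where "b' = min b (1/2)"
  show ?thesis
  proof (rule that[of b'])
    show "0 < b'" "b' < 1" using b unfolding b'_def by auto
    fix v assume v: "0 < v" "v < b'"
    then have v1: "v < 1" "v < b" unfolding b'_def by auto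
    have cv: "0 < sqrt (c * v)" using c_pos v by simp
    have "LB v * sqrt (c * v) < sqrt q" using b(2)[of v] v v1 unfolding LB_def by (simp add: mult.assoc)
    then have lb: "LB v < sqrt q / sqrt (c * v)" using cv by (simp add: field_simps)
    have "Lm v \<le> v powr al * LB v" using Lm_LB v v1 by auto
    also have "\<dots> < v powr al * (sqrt q / sqrt (c * v))" using lb v by (intro mult_strict_left_mono) auto
    also have "\<dots> = sqrt q * v powr al / sqrt (c * v)" by simp
    also have "\<dots> \<le> sqrt q * kf v / sqrt (c * v * (1 - v))" using rhs_ge(1) v v1 by auto
    finally show "Lm v < sqrt q * kf v / sqrt (c * v * (1 - v))" .
  qed
qed

lemma E1: obtains b where "0 < b" "b < 1"
  "\<And>v. b < v \<Longrightarrow> v < 1 \<Longrightarrow> Lm v < sqrt q * kf v / sqrt (c * v * (1 - v))"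
proof -
  define M where "M = sqrt q * (1/2) powr al"
  have M: "M > 0" unfolding M_def using q_pos by simp
  have "((\<lambda>v. CA * ((1 / al - ln (1 - v)) * sqrt (c * (1 - v)))) \<longlongrightarrow> CA * 0) (at_left 1)"
    by (intro tendsto_mult tendsto_const l1)
  then have "eventually (\<lambda>v. CA * ((1 / al - ln (1 - v)) * sqrt (c * (1 - v))) < M) (at_left 1)"
    by (rule order_tendstoD(2)) (use M in simp)
  then obtain b where b: "b < 1" "\<And>y. b < y \<Longrightarrow> y < 1 \<Longrightarrow> CA * ((1 / al - ln (1 - y)) * sqrt (c * (1 - y))) < M"
    unfolding eventually_at_left_field by auto
  define b' where "b' = max b (1/2)"
  show ?thesis
  proof (rule that[of b'])
    show "0 < b'" "b' < 1" using b unfolding b'_def by auto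
    fix v assume v: "b' < v" "v < 1"
    then have v1: "0 < v" "b < v" "1/2 < v" unfolding b'_def by auto
    have cv: "0 < sqrt (c * (1 - v))" using c_pos v by simp
    have "LB v * sqrt (c * (1 - v)) < M" using b(2)[of v] v v1 unfolding LB_def by (simp add: mult.assoc)
    then have lb: "LB v < M / sqrt (c * (1 - v))" using cv by (simp add: field_simps)
    have "Lm v \<le> v powr al * LB v" using Lm_LB v v1 by auto
    also have "\<dots> \<le> LB v" using LB_nonneg[of v] v v1 al_pos
      by (intro mult_left_le_one_le) (auto intro: powr_le1)
    also have "\<dots> < M / sqrt (c * (1 - v))" by (rule lb)
    also have "\<dots> \<le> sqrt q * v powr al / sqrt (c * (1 - v))"
      unfolding M_def using cv v1 al_pos q_pos
      by (intro divide_right_mono mult_left_mono powr_mono2) auto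
    also have "\<dots> \<le> sqrt q * kf v / sqrt (c * v * (1 - v))" using rhs_ge(2) v v1 by auto
    finally show "Lm v < sqrt q * kf v / sqrt (c * v * (1 - v))" .
  qed
qed

lemma IX_interval: assumes "a \<in> IX" "b \<in> IX" "a \<le> x" "x \<le> b" shows "x \<in> IX"
proof -
  have "ereal x \<le> ereal b" using assms by simp
  also have "\<dots> < XI" using assms unfolding Ixi_def by auto
  finally show ?thesis using assms unfolding Ixi_def by auto
qed

lemma rfun_pos: assumes "s \<in> IX" shows "0 < rfun p \<rho> d c s"
  unfolding rfun_eq[OF assms] using ph_prop[OF assms] kf_pos c_pos by auto

lemma W_lt: assumes s: "s \<in> IX" and v: "Lm (ph s) < sqrt q * kf (ph s) / sqrt (c * ph s * (1 - ph s))"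
  shows "W s < sqrt q * rfun p \<rho> d c s"
  using W_le[OF s] v unfolding rfun_eq[OF s] by simp

lemma ends: obtains s1 s2 where "0 < s1" "s1 < s2" "ereal s2 < XI"
  "\<And>s. s \<in> IX \<Longrightarrow> s < s1 \<or> s2 < s \<Longrightarrow> W s < sqrt q * rfun p \<rho> d c s"
proof -
  obtain b0 where b0: "0 < b0" "b0 < 1"
    "\<And>v. 0 < v \<Longrightarrow> v < b0 \<Longrightarrow> Lm v < sqrt q * kf v / sqrt (c * v * (1 - v))" using E0 by blast
  obtain b1 where b1: "0 < b1" "b1 < 1"
    "\<And>v. b1 < v \<Longrightarrow> v < 1 \<Longrightarrow> Lm v < sqrt q * kf v / sqrt (c * v * (1 - v))" using E1 by blast
  define v1 where "v1 = max b1 (1/2)"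
  define v2 where "v2 = min (b0/2) (1/4)"
  have v: "0 < v2" "v2 < v1" "v1 < 1" "v2 < b0" "b1 \<le> v1"
    using b0 b1 unfolding v1_def v2_def by auto
  show ?thesis
  proof (rule that[of "th v1" "th v2"])
    show "0 < th v1" using th_pos v by auto
    show "th v1 < th v2" using th_strict v by auto
    show "ereal (th v2) < XI" using th_less_xi v by auto
    fix s assume s: "s \<in> IX" and ss: "s < th v1 \<or> th v2 < s"
    have p: "0 < ph s" "ph s < 1" using ph_prop[OF s] by auto
    show "W s < sqrt q * rfun p \<rho> d c s"
    proof (rule W_lt[OF s])
      show "Lm (ph s) < sqrt q * kf (ph s) / sqrt (c * ph s * (1 - ph s))"
      proof (cases "s < th v1")
        case True
        then have "v1 < ph s" using ph_greater[OF s] v by auto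
        then show ?thesis using b1(3)[of "ph s"] v p by auto
      next
        case False
        then have "th v2 < s" using ss by auto
        then have "ph s < v2" using ph_less[OF s] v by auto
        then show ?thesis using b0(3)[of "ph s"] v p by auto
      qed
    qed
  qed
qed

lemma W_dec: assumes "x < y" "\<And>z. x \<le> z \<Longrightarrow> z \<le> y \<Longrightarrow> z \<in> IX \<and> W z < sqrt q * rfun p \<rho> d c z"
  shows "W y < W x"
proof (rule DERIV_neg_imp_decreasing[OF assms(1)])
  fix z assume z: "x \<le> z" "z \<le> y"
  have zi: "z \<in> IX" and wl: "W z < sqrt q * rfun p \<rho> d c z" using assms(2)[OF z] by auto
  have "W z ^ 2 < (sqrt q * rfun p \<rho> d c z) ^ 2"
    using W_pos[OF zi] wl by (intro power_strict_mono) auto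
  also have "\<dots> = q * rfun p \<rho> d c z ^ 2" using q_pos by (simp add: power_mult_distrib)
  finally have "W z ^ 2 - q * rfun p \<rho> d c z ^ 2 < 0" by simp
  then show "\<exists>D. (W has_real_derivative D) (at z) \<and> D < 0" using W_deriv[OF zi] by blast
qed

lemma W_props: "\<exists>s1 s2. 0 < s1 \<and> s1 < s2 \<and> ereal s2 < XI \<and>
        (\<forall>s\<in>IX. (s < s1 \<or> s2 < s) \<longrightarrow> W s < sqrt q * rfun p \<rho> d c s)"
  "\<exists>e>0. \<forall>x y. 0 < x \<and> x < y \<and> y < e \<longrightarrow> W y < W x"
  "\<exists>a. ereal a < XI \<and> (\<forall>x y. a < x \<and> x < y \<and> ereal y < XI \<longrightarrow> W y < W x)"
proof -
  obtain s1 s2 where s: "0 < s1" "s1 < s2" "ereal s2 < XI"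
    "\<And>s. s \<in> IX \<Longrightarrow> s < s1 \<or> s2 < s \<Longrightarrow> W s < sqrt q * rfun p \<rho> d c s" using ends by blast
  show "\<exists>s1 s2. 0 < s1 \<and> s1 < s2 \<and> ereal s2 < XI \<and>
        (\<forall>s\<in>IX. (s < s1 \<or> s2 < s) \<longrightarrow> W s < sqrt q * rfun p \<rho> d c s)"
    using s by blast
  have s1X: "ereal s1 < XI" using s by (meson ereal_less_eq(3) less_imp_le order_le_less_trans)
  show "\<exists>e>0. \<forall>x y. 0 < x \<and> x < y \<and> y < e \<longrightarrow> W y < W x"
  proof (intro exI[of _ s1] conjI allI impI)
    show "0 < s1" by fact
    fix x y assume xy: "0 < x \<and> x < y \<and> y < s1"
    show "W y < W x"
    proof (rule W_dec)
      show "x < y" using xy by simp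
      fix z assume z: "x \<le> z" "z \<le> y"
      have "ereal z < ereal s1" using z xy by simp
      then have "ereal z < XI" using s1X by (rule less_trans)
      then have zi: "z \<in> IX" unfolding Ixi_def using z xy by auto
      show "z \<in> IX \<and> W z < sqrt q * rfun p \<rho> d c z" using zi s(4)[OF zi] z xy by auto
    qed
  qed
  show "\<exists>a. ereal a < XI \<and> (\<forall>x y. a < x \<and> x < y \<and> ereal y < XI \<longrightarrow> W y < W x)"
  proof (intro exI[of _ s2] conjI allI impI)
    show "ereal s2 < XI" by fact
    fix x y assume xy: "s2 < x \<and> x < y \<and> ereal y < XI"
    show "W y < W x"
    proof (rule W_dec)
      show "x < y" using xy by simp
      fix z assume z: "x \<le> z" "z \<le> y"
      have "ereal z \<le> ereal y" using z by simp
      then have "ereal z < XI" using xy by (meson order_le_less_trans)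
      then have zi: "z \<in> IX" unfolding Ixi_def using z xy s by auto
      show "z \<in> IX \<and> W z < sqrt q * rfun p \<rho> d c z" using zi s(4)[OF zi] z xy by auto
    qed
  qed
qed

lemma uniq: assumes r1: "riccati_sol p \<rho> d c q w1" and r2: "riccati_sol p \<rho> d c q w2"
  and n1: "\<forall>s\<in>IX. w1 s \<ge> 0" and n2: "\<forall>s\<in>IX. w2 s \<ge> 0"
  and l1: "(w1 \<longlongrightarrow> 0) (at_xi p \<rho> d c)" and l2: "(w2 \<longlongrightarrow> 0) (at_xi p \<rho> d c)"
  and s: "s \<in> IX"
  shows "w1 s = w2 s"
proof -
  define z where "z x = (w1 x - w2 x)^2" for x
  have dz: "(z has_real_derivative 2 * (w1 x - w2 x)^2 * (w1 x + w2 x)) (at x)" if x: "x \<in> IX" for x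
  proof -
    have d1: "(w1 has_real_derivative (w1 x ^ 2 - q * rfun p \<rho> d c x ^ 2)) (at x)"
      using r1 x unfolding riccati_sol_def by auto
    have d2: "(w2 has_real_derivative (w2 x ^ 2 - q * rfun p \<rho> d c x ^ 2)) (at x)"
      using r2 x unfolding riccati_sol_def by auto
    have "(z has_real_derivative (of_nat 2 * (((w1 x ^ 2 - q * rfun p \<rho> d c x ^ 2) - (w2 x ^ 2 - q * rfun p \<rho> d c x ^ 2)) * (w1 x - w2 x) ^ (2 - Suc 0)))) (at x)"
      unfolding z_def[abs_def] by (rule DERIV_power[OF DERIV_diff[OF d1 d2]])
    then show ?thesis by (simp add: power2_eq_square algebra_simps)
  qed
  have mono: "z s \<le> z t" if t: "t \<in> IX" "s \<le> t" for t
  proof (rule DERIV_nonneg_imp_increasing_open[OF t(2)])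
    fix x assume x: "s < x" "x < t"
    then have xi: "x \<in> IX" using IX_interval[OF s t(1)] by auto
    have "0 \<le> 2 * (w1 x - w2 x)^2 * (w1 x + w2 x)" using n1 n2 xi by auto
    then show "\<exists>y. (z has_real_derivative y) (at x) \<and> 0 \<le> y" using dz[OF xi] by blast
  next
    show "continuous_on {s..t} z"
      by (intro continuous_at_imp_continuous_on ballI DERIV_isCont) (use dz IX_interval[OF s t(1)] in auto)
  qed
  have zl: "(z \<longlongrightarrow> (0 - 0)^2) (at_xi p \<rho> d c)" unfolding z_def by (intro tendsto_intros l1 l2)
  have ev: "eventually (\<lambda>t. z s \<le> z t) (at_xi p \<rho> d c)"
    using ev_xi[of "ph s"] ph_prop[OF s]
    by (auto elim!: eventually_mono intro!: mono)
  have "z s \<le> 0" using tendsto_le[OF at_xi_nontriv zl tendsto_const ev] by simp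
  then show ?thesis unfolding z_def by simp
qed

definition Lg where "Lg s = - ln (U (ph s))"

lemma Lg_deriv: assumes s: "s \<in> IX" shows "(Lg has_real_derivative W s) (at s)"
proof -
  define v where "v = ph s"
  have v: "0 < v" "v < 1" using ph_prop[OF s] unfolding v_def by auto
  have U1: "1 \<le> U v" using U_ge1 v by auto
  have dU: "((\<lambda>x. U (ph x)) has_real_derivative (F v / kf v) * (- kf v)) (at s)"
    using DERIV_chain2[OF U_deriv[OF v, unfolded v_def] ph_deriv[OF s]] unfolding v_def .
  have "((\<lambda>x. ln (U (ph x))) has_real_derivative inverse (U v) * ((F v / kf v) * (- kf v))) (at s)"
    using DERIV_chain2[OF DERIV_ln[of "U (ph s)"] dU[unfolded v_def]] U1 unfolding v_def by simp
  then have "(Lg has_real_derivative - (inverse (U v) * ((F v / kf v) * (- kf v)))) (at s)"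
    unfolding Lg_def[abs_def] by (rule DERIV_minus)
  moreover have "- (inverse (U v) * ((F v / kf v) * (- kf v))) = W s"
    unfolding W_def v_def[symmetric] using kf_pos[of v] by (simp add: field_simps)
  ultimately show ?thesis by simp
qed

definition Mx where "Mx = CA / al + 4 * CA"

lemma Lg_bounds: assumes s: "s \<in> IX" shows "- Mx \<le> Lg s" "Lg s \<le> 0"
proof -
  have p: "0 < ph s" "ph s < 1" using ph_prop[OF s] by auto
  have U1: "1 \<le> U (ph s)" using U_ge1 p by auto
  have "U (ph s) \<le> Phi (ph s)" using GoodD(3)[OF U_good] p by auto
  also have "\<dots> \<le> exp Mx" using Phi_bound p unfolding Mx_def by auto
  finally have "ln (U (ph s)) \<le> ln (exp Mx)" using U1 by (subst ln_le_cancel_iff) auto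
  then have "ln (U (ph s)) \<le> Mx" by simp
  then show "- Mx \<le> Lg s" unfolding Lg_def by simp
  show "Lg s \<le> 0" unfolding Lg_def using U1 by simp
qed

lemma W_integrable: "W integrable_on IX"
proof -
  define an where "an n = th (1 - 1 / real (n + 2))" for n
  define bn where "bn n = th (1 / real (n + 2))" for n
  have r: "0 < 1 / real (n + 2)" "1 / real (n + 2) < 1" "1 / real (n + 2) \<le> 1 - 1 / real (n + 2)"
    "0 < 1 - 1 / real (n + 2)" "1 - 1 / real (n + 2) < 1" for n
    by (auto simp: field_simps)
  have anI: "an n \<in> IX" "bn n \<in> IX" for n unfolding an_def bn_def using th_in_IX r by auto
  have anb: "an n \<le> bn n" for n
    unfolding an_def bn_def using th_strict[of "1 / real (n + 2)" "1 - 1 / real (n + 2)"] r[of n]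
    by (cases "1 / real (n + 2) = 1 - 1 / real (n + 2)") auto
  have sub: "{an n..bn n} \<subseteq> IX" for n using IX_interval[OF anI(1) anI(2)] by auto
  have hi: "(W has_integral (Lg (bn n) - Lg (an n))) {an n..bn n}" for n
  proof (rule fundamental_theorem_of_calculus[OF anb])
    fix x assume "x \<in> {an n..bn n}"
    then have "x \<in> IX" using sub[of n] by blast
    then show "(Lg has_vector_derivative W x) (at x within {an n..bn n})"
      using Lg_deriv by (simp add: has_real_derivative_iff_has_vector_derivative[symmetric] has_field_derivative_at_within)
  qed
  define f where "f n x = (if x \<in> {an n..bn n} then W x else 0)" for n x
  have fhi: "(f n has_integral (Lg (bn n) - Lg (an n))) IX" for n
    unfolding f_def has_integral_restrict_Int using hi sub by (simp add: Int_absorb2)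
  have mono_ab: "an (Suc n) \<le> an n \<and> bn n \<le> bn (Suc n)" for n
  proof -
    have a: "1 - 1 / real (n + 2) < 1 - 1 / real (Suc n + 2)" "1 / real (Suc n + 2) < 1 / real (n + 2)"
      by (auto simp: field_simps)
    have "th (1 - 1 / real (Suc n + 2)) \<le> th (1 - 1 / real (n + 2))"
      using th_strict[of "1 - 1 / real (n + 2)" "1 - 1 / real (Suc n + 2)"] a r[of n] r[of "Suc n"] by auto
    moreover have "th (1 / real (n + 2)) \<le> th (1 / real (Suc n + 2))"
      using th_strict[of "1 / real (Suc n + 2)" "1 / real (n + 2)"] a r[of n] r[of "Suc n"] by auto
    ultimately show ?thesis unfolding an_def bn_def by auto
  qed
  have "W integrable_on IX \<and> ((\<lambda>k. integral IX (f k)) \<longlonglongrightarrow> integral IX W)"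
  proof (rule monotone_convergence_increasing)
    show "f k integrable_on IX" for k using fhi by blast
    show "f k x \<le> f (Suc k) x" if "x \<in> IX" for k x
      using mono_ab[of k] W_pos[OF that] unfolding f_def by auto
    show "(\<lambda>k. f k x) \<longlonglongrightarrow> W x" if x: "x \<in> IX" for x
    proof (rule tendsto_eventually)
      define v where "v = ph x"
      have v: "0 < v" "v < 1" "th v = x" using ph_prop[OF x] unfolding v_def by auto
      obtain N :: nat where N: "inverse (real (Suc N)) < min v (1 - v)" using v reals_Archimedean[of "min v (1 - v)"] by auto
      show "eventually (\<lambda>k. f k x = W x) sequentially"
        unfolding eventually_sequentially
      proof (intro exI[of _ N] allI impI)
        fix n assume n: "N \<le> n"
        have "1 / real (n + 2) \<le> inverse (real (Suc N))" using n by (simp add: field_simps)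
        then have e: "1 / real (n + 2) < v" "1 / real (n + 2) < 1 - v" using N by auto
        have "an n \<le> x" unfolding an_def using th_strict[of v "1 - 1 / real (n + 2)"] e v r[of n] by auto
        moreover have "x \<le> bn n" unfolding bn_def using th_strict[of "1 / real (n + 2)" v] e v r[of n] by auto
        ultimately show "f n x = W x" unfolding f_def by auto
      qed
    qed
    have "\<bar>integral IX (f k)\<bar> \<le> Mx" for k
    proof -
      have "integral IX (f k) = Lg (bn k) - Lg (an k)" using fhi by (rule integral_unique)
      moreover have "0 \<le> integral IX (f k)"
        using fhi[of k] W_pos unfolding f_def by (intro integral_nonneg) (auto simp: has_integral_integrable less_imp_le)
      ultimately show ?thesis using Lg_bounds[OF anI(1), of k] Lg_bounds[OF anI(2), of k] by auto
    qed
    then show "bounded (range (\<lambda>k. integral IX (f k)))" unfolding bounded_iff by auto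
  qed
  then show ?thesis by blast
qed

lemma main: "riccati_sol p \<rho> d c q W
   \<and> (\<forall>s\<in>Ixi p \<rho> d c. W s \<ge> 0)
   \<and> (W \<longlongrightarrow> 0) (at_xi p \<rho> d c)
   \<and> (\<forall>w'. riccati_sol p \<rho> d c q w' \<and> (\<forall>s\<in>Ixi p \<rho> d c. w' s \<ge> 0)
           \<and> (w' \<longlongrightarrow> 0) (at_xi p \<rho> d c)
           \<longrightarrow> (\<forall>s\<in>Ixi p \<rho> d c. w' s = W s))
   \<and> (\<forall>s\<in>Ixi p \<rho> d c. W s > 0)
   \<and> (\<exists>s1 s2. 0 < s1 \<and> s1 < s2 \<and> ereal s2 < xi p \<rho> d c \<and>
        (\<forall>s\<in>Ixi p \<rho> d c. (s < s1 \<or> s2 < s) \<longrightarrow> W s < sqrt q * rfun p \<rho> d c s))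
   \<and> W integrable_on Ixi p \<rho> d c
   \<and> (\<exists>e>0. \<forall>x y. 0 < x \<and> x < y \<and> y < e \<longrightarrow> W y < W x)
   \<and> (\<exists>a. ereal a < xi p \<rho> d c \<and>
        (\<forall>x y. a < x \<and> x < y \<and> ereal y < xi p \<rho> d c \<longrightarrow> W y < W x))"
proof (intro conjI allI impI ballI)
  show "riccati_sol p \<rho> d c q W" by (rule W_riccati)
  show "0 \<le> W s" if "s \<in> IX" for s using W_pos[OF that] by simp
  show "(W \<longlongrightarrow> 0) (at_xi p \<rho> d c)" by (rule W_lim)
  show "w' s = W s" if "riccati_sol p \<rho> d c q w' \<and> (\<forall>s\<in>IX. 0 \<le> w' s) \<and> (w' \<longlongrightarrow> 0) (at_xi p \<rho> d c)"
    and "s \<in> IX" for w' s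
    using uniq[of w' W s] that W_riccati W_pos W_lim by (auto simp: less_imp_le)
  show "0 < W s" if "s \<in> IX" for s using W_pos[OF that] .
  show "W integrable_on IX" by (rule W_integrable)
qed (use W_props in auto)

lemma main_ex: "\<exists>w. riccati_sol p \<rho> d c q w
   \<and> (\<forall>s\<in>Ixi p \<rho> d c. w s \<ge> 0)
   \<and> (w \<longlongrightarrow> 0) (at_xi p \<rho> d c)
   \<and> (\<forall>w'. riccati_sol p \<rho> d c q w' \<and> (\<forall>s\<in>Ixi p \<rho> d c. w' s \<ge> 0)
           \<and> (w' \<longlongrightarrow> 0) (at_xi p \<rho> d c)
           \<longrightarrow> (\<forall>s\<in>Ixi p \<rho> d c. w' s = w s))
   \<and> (\<forall>s\<in>Ixi p \<rho> d c. w s > 0)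
   \<and> (\<exists>s1 s2. 0 < s1 \<and> s1 < s2 \<and> ereal s2 < xi p \<rho> d c \<and>
        (\<forall>s\<in>Ixi p \<rho> d c. (s < s1 \<or> s2 < s) \<longrightarrow> w s < sqrt q * rfun p \<rho> d c s))
   \<and> w integrable_on Ixi p \<rho> d c
   \<and> (\<exists>e>0. \<forall>x y. 0 < x \<and> x < y \<and> y < e \<longrightarrow> w y < w x)
   \<and> (\<exists>a. ereal a < xi p \<rho> d c \<and>
        (\<forall>x y. a < x \<and> x < y \<and> ereal y < xi p \<rho> d c \<longrightarrow> w y < w x))"
  using main by blast

end
theorem lemma2p1:
  fixes p :: "nat \<Rightarrow> real" and \<rho> d c :: real
  assumes rho_pos: "\<rho> > 0" and d_pos: "d > 0" and c_pos: "c > 0"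
    and p_nonneg: "\<And>k. k \<ge> 1 \<Longrightarrow> p k \<ge> 0"
    and p_sum: "(\<lambda>k. p (Suc k)) sums \<rho>"
    and condL: "summable (\<lambda>i. p (Suc i) * ln (real (Suc i)))"
  shows "\<forall>q>0. \<exists>w.
     riccati_sol p \<rho> d c q w
   \<and> (\<forall>s\<in>Ixi p \<rho> d c. w s \<ge> 0)
   \<and> (w \<longlongrightarrow> 0) (at_xi p \<rho> d c)
   \<and> (\<forall>w'. riccati_sol p \<rho> d c q w' \<and> (\<forall>s\<in>Ixi p \<rho> d c. w' s \<ge> 0)
           \<and> (w' \<longlongrightarrow> 0) (at_xi p \<rho> d c)
           \<longrightarrow> (\<forall>s\<in>Ixi p \<rho> d c. w' s = w s))
   \<and> (\<forall>s\<in>Ixi p \<rho> d c. w s > 0)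
   \<and> (\<exists>s1 s2. 0 < s1 \<and> s1 < s2 \<and> ereal s2 < xi p \<rho> d c \<and>
        (\<forall>s\<in>Ixi p \<rho> d c. (s < s1 \<or> s2 < s) \<longrightarrow> w s < sqrt q * rfun p \<rho> d c s))
   \<and> w integrable_on Ixi p \<rho> d c
   \<and> (\<exists>e>0. \<forall>x y. 0 < x \<and> x < y \<and> y < e \<longrightarrow> w y < w x)
   \<and> (\<exists>a. ereal a < xi p \<rho> d c \<and>
        (\<forall>x y. a < x \<and> x < y \<and> ereal y < xi p \<rho> d c \<longrightarrow> w y < w x))"
  apply (intro allI impI)
  apply (rule bdq.main_ex)
  apply unfold_locales
  using assms apply auto
  done

end
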